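(* Let PS1 and PS2 be two pure strategies (as in the context) with $m_{PS1}(X)$ finite for every $X\in\mathcal{S}$. Then PS2 is complementary to PS1 (i.e. there exists $X\in\mathcal{S}_{\mathrm{non}}$ with $\Delta_{PS1}(X)<\Delta_{PS2}(X)$) if and only if there exists a mixed strategy MS derived from PS1 and PS2 whose average expected hitting time is strictly less than that of PS1, i.e. $\bar m_{MS}<\bar m_{PS1}$, where $\bar m=\frac{1}{|\mathcal{S}|}\sum_{X\in\mathcal{S}}m(X)$.
   Context: A fitness function $f$ on a finite set is to be maximised. A metaheuristic generates populations $\Phi_0,\Phi_1,\dots$. Let $\mathcal{S}$ be the finite set of all populations, $\mathcal{S}_{\mathrm{opt}}$ those containing at least one optimal solution, $\mathcal{S}_{\mathrm{non}}=\mathcal{S}\setminus\mathcal{S}_{\mathrm{opt}}$. The sequence is a time-homogeneous Markov chain on $\mathcal{S}$ with transition probabilities $P(X,Y)=\Pr(\Phi_{t+1}=Y\mid\Phi_t=X)$, every state of $\mathcal{S}_{\mathrm{opt}}$ absorbing. The expected hitting time $m(X)\in[0,\infty]$ is the expected number of generations until first entering $\mathcal{S}_{\mathrm{opt}}$ from $\Phi_0=X$ ($m(X)=0$ on $\mathcal{S}_{\mathrm{opt}}$). A pure strategy is such a time-independent transition matrix. PS1, PS2 are pure strategies with transition matrices $P_1,P_2$ on the same $\mathcal{S}$ (with $\mathcal{S}_{\mathrm{opt}}$ absorbing), expected hitting times $m_{PS1},m_{PS2}$. A mixed strategy MS derived from PS1 and PS2 assigns to each $X\in\mathcal{S}$ probabilities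 $P_X(PS1)\in[0,1]$, $P_X(PS2)=1-P_X(PS1)$, and has transition matrix $P_{MS}(X,Y)=P_X(PS1)P_1(X,Y)+P_X(PS2)P_2(X,Y)$, with expected hitting time $m_{MS}$. With $d(X)=m_{PS1}(X)$, for $X\in\mathcal{S}_{\mathrm{non}}$: $\Delta_{PS1}(X)=d(X)-\sum_{Y\in\mathcal{S}_{\mathrm{non}}}P_1(X,Y)d(Y)$, $\Delta_{PS2}(X)=d(X)-\sum_{Y\in\mathcal{S}_{\mathrm{non}}}P_2(X,Y)d(Y)$. *)

theory Defs
  imports "HOL-Analysis.Analysis"
begin

definition pure_strategy :: "'a set \<Rightarrow> 'a set \<Rightarrow> ('a \<Rightarrow> 'a \<Rightarrow> real) \<Rightarrow> bool" where
  "pure_strategy S Sopt P \<longleftrightarrow>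
     (\<forall>X\<in>S. \<forall>Y\<in>S. 0 \<le> P X Y) \<and>
     (\<forall>X\<in>S. (\<Sum>Y\<in>S. P X Y) = 1) \<and>
     (\<forall>X\<in>Sopt. P X X = 1)"

text \<open>not_hit S Sopt P t X = Pr(Phi_0,...,Phi_t all lie outside Sopt | Phi_0 = X),
  i.e. the probability that the hitting time exceeds t.\<close>
fun not_hit :: "'a set \<Rightarrow> 'a set \<Rightarrow> ('a \<Rightarrow> 'a \<Rightarrow> real) \<Rightarrow> nat \<Rightarrow> 'a \<Rightarrow> real" where
  "not_hit S Sopt P 0 X = (if X \<in> Sopt then 0 else 1)"
| "not_hit S Sopt P (Suc t) X =
     (if X \<in> Sopt then 0 else (\<Sum>Y\<in>S. P X Y * not_hit S Sopt P t Y))"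

text \<open>Expected hitting time E[T] = sum_{t>=0} Pr(T > t), valued in [0,\<infinity>].\<close>
definition hit_time :: "'a set \<Rightarrow> 'a set \<Rightarrow> ('a \<Rightarrow> 'a \<Rightarrow> real) \<Rightarrow> 'a \<Rightarrow> ennreal" where
  "hit_time S Sopt P X = (\<Sum>t. ennreal (not_hit S Sopt P t X))"

definition avg_hit_time :: "'a set \<Rightarrow> 'a set \<Rightarrow> ('a \<Rightarrow> 'a \<Rightarrow> real) \<Rightarrow> ennreal" where
  "avg_hit_time S Sopt P = (\<Sum>X\<in>S. hit_time S Sopt P X) / of_nat (card S)"

definition mixed :: "('a \<Rightarrow> real) \<Rightarrow> ('a \<Rightarrow> 'a \<Rightarrow> real) \<Rightarrow> ('a \<Rightarrow> 'a \<Rightarrow> real) \<Rightarrow> 'a \<Rightarrow> 'a \<Rightarrow> real" where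
  "mixed q P1 P2 X Y = q X * P1 X Y + (1 - q X) * P2 X Y"

definition Delta :: "'a set \<Rightarrow> 'a set \<Rightarrow> ('a \<Rightarrow> real) \<Rightarrow> ('a \<Rightarrow> 'a \<Rightarrow> real) \<Rightarrow> 'a \<Rightarrow> real" where
  "Delta S Sopt d P X = d X - (\<Sum>Y\<in>S - Sopt. P X Y * d Y)"

definition complementary :: "'a set \<Rightarrow> 'a set \<Rightarrow> ('a \<Rightarrow> 'a \<Rightarrow> real) \<Rightarrow> ('a \<Rightarrow> 'a \<Rightarrow> real) \<Rightarrow> bool" where
  "complementary S Sopt P1 P2 \<longleftrightarrow>
     (let d = (\<lambda>X. enn2real (hit_time S Sopt P1 X)) in
      \<exists>X\<in>S - Sopt. Delta S Sopt d P1 X < Delta S Sopt d P2 X)"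

end

theory Submission
  imports Defs
begin

lemma nh_opt: "X \<in> Sopt \<Longrightarrow> not_hit S Sopt P t X = 0"
  by (cases t) auto

lemma nh_nonneg_all:
  assumes "\<forall>X\<in>S. \<forall>Y\<in>S. 0 \<le> P X Y"
  shows "\<forall>X\<in>S. 0 \<le> not_hit S Sopt P t X"
proof (induction t)
  case 0 then show ?case by simp
next
  case (Suc t)
  then show ?case using assms by (auto intro!: sum_nonneg)
qed

lemma nh_nonneg:
  assumes "\<forall>X\<in>S. \<forall>Y\<in>S. 0 \<le> P X Y" "X \<in> S"
  shows "0 \<le> not_hit S Sopt P t X"
  using nh_nonneg_all[OF assms(1)] assms(2) by blast

lemma u_rec:
  assumes "X \<notin> Sopt"
  shows "(\<Sum>t<Suc n. not_hit S Sopt P t X) = 1 + (\<Sum>Y\<in>S. P X Y * (\<Sum>t<n. not_hit S Sopt P t Y))"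
proof -
  have "(\<Sum>t<Suc n. not_hit S Sopt P t X) = not_hit S Sopt P 0 X + (\<Sum>t<n. not_hit S Sopt P (Suc t) X)"
    by (rule sum.lessThan_Suc_shift)
  also have "\<dots> = 1 + (\<Sum>t<n. \<Sum>Y\<in>S. P X Y * not_hit S Sopt P t Y)"
    using assms by simp
  also have "\<dots> = 1 + (\<Sum>Y\<in>S. P X Y * (\<Sum>t<n. not_hit S Sopt P t Y))"
    by (simp add: sum.swap[of _ "{..<n}"] sum_distrib_left)
  finally show ?thesis .
qed

lemma upper:
  assumes fin: "finite S" and nn: "\<forall>X\<in>S. \<forall>Y\<in>S. 0 \<le> P X Y"
    and e0: "\<forall>X\<in>S. 0 \<le> e X"
    and ee: "\<forall>X\<in>S - Sopt. 1 + (\<Sum>Y\<in>S. P X Y * e Y) \<le> e X"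
    and X: "X \<in> S"
  shows "hit_time S Sopt P X \<le> ennreal (e X)"
proof -
  have part: "\<forall>X\<in>S. (\<Sum>t<n. not_hit S Sopt P t X) \<le> e X" for n
  proof (induction n)
    case 0 then show ?case using e0 by simp
  next
    case (Suc n)
    show ?case
    proof
      fix X assume XS: "X \<in> S"
      show "(\<Sum>t<Suc n. not_hit S Sopt P t X) \<le> e X"
      proof (cases "X \<in> Sopt")
        case True
        then show ?thesis using e0 XS by (simp add: nh_opt)
      next
        case False
        have "(\<Sum>t<Suc n. not_hit S Sopt P t X) = 1 + (\<Sum>Y\<in>S. P X Y * (\<Sum>t<n. not_hit S Sopt P t Y))"
          by (rule u_rec[OF False])
        also have "\<dots> \<le> 1 + (\<Sum>Y\<in>S. P X Y * e Y)"
          using Suc nn XS by (auto intro!: sum_mono mult_left_mono)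
        also have "\<dots> \<le> e X" using ee XS False by auto
        finally show ?thesis .
      qed
    qed
  qed
  have nhn: "\<And>t. 0 \<le> not_hit S Sopt P t X" using nh_nonneg[OF nn X] .
  have sm: "summable (\<lambda>t. not_hit S Sopt P t X)"
    using part X nhn by (auto intro!: summableI_nonneg_bounded)
  have "hit_time S Sopt P X = ennreal (\<Sum>t. not_hit S Sopt P t X)"
    unfolding hit_time_def using suminf_ennreal2[OF nhn sm] .
  moreover have "(\<Sum>t. not_hit S Sopt P t X) \<le> e X"
    using part X nhn sm by (auto intro!: suminf_le_const)
  ultimately show ?thesis by (simp add: ennreal_leI)
qed

lemma lower:
  assumes fin: "finite S" and nn: "\<forall>X\<in>S. \<forall>Y\<in>S. 0 \<le> P X Y"
    and e0: "\<forall>X\<in>S. 0 \<le> e X \<and> e X \<le> M" and eopt: "\<forall>X\<in>Sopt. e X = 0"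
    and ee: "\<forall>X\<in>S - Sopt. e X \<le> 1 + (\<Sum>Y\<in>S. P X Y * e Y)"
    and X: "X \<in> S"
  shows "ennreal (e X) \<le> hit_time S Sopt P X"
proof -
  have part: "\<forall>X\<in>S. e X \<le> (\<Sum>t<n. not_hit S Sopt P t X) + M * not_hit S Sopt P n X" for n
  proof (induction n)
    case 0 then show ?case using e0 eopt by auto
  next
    case (Suc n)
    show ?case
    proof
      fix X assume XS: "X \<in> S"
      show "e X \<le> (\<Sum>t<Suc n. not_hit S Sopt P t X) + M * not_hit S Sopt P (Suc n) X"
      proof (cases "X \<in> Sopt")
        case True
        then show ?thesis using eopt by (simp add: nh_opt)
      next
        case False
        have "e X \<le> 1 + (\<Sum>Y\<in>S. P X Y * e Y)" using ee XS False by auto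
        also have "\<dots> \<le> 1 + (\<Sum>Y\<in>S. P X Y * ((\<Sum>t<n. not_hit S Sopt P t Y) + M * not_hit S Sopt P n Y))"
          using Suc nn XS by (auto intro!: sum_mono mult_left_mono)
        also have "\<dots> = (\<Sum>t<Suc n. not_hit S Sopt P t X) + M * not_hit S Sopt P (Suc n) X"
          using u_rec[OF False, of S P n] False
          by (simp add: distrib_left sum.distrib sum_distrib_left algebra_simps)
        finally show ?thesis .
      qed
    qed
  qed
  have nhn: "\<And>t. 0 \<le> not_hit S Sopt P t X" using nh_nonneg[OF nn X] .
  show ?thesis
  proof (cases "hit_time S Sopt P X = \<infinity>")
    case True then show ?thesis by simp
  next
    case False
    have sm: "summable (\<lambda>t. not_hit S Sopt P t X)"
      using False unfolding hit_time_def by (intro summable_suminf_not_top[OF nhn]) auto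
    have ht: "hit_time S Sopt P X = ennreal (\<Sum>t. not_hit S Sopt P t X)"
      unfolding hit_time_def using suminf_ennreal2[OF nhn sm] .
    have lim: "(\<lambda>n. (\<Sum>t<n. not_hit S Sopt P t X) + M * not_hit S Sopt P n X)
        \<longlonglongrightarrow> (\<Sum>t. not_hit S Sopt P t X) + M * 0"
      by (intro tendsto_intros summable_LIMSEQ summable_LIMSEQ_zero sm)
    have "e X \<le> (\<Sum>t. not_hit S Sopt P t X)"
      using LIMSEQ_le_const[OF lim, of "e X"] part X by auto
    then show ?thesis using ht by (simp add: ennreal_leI)
  qed
qed


lemma ht_real:
  assumes nn: "\<forall>X\<in>S. \<forall>Y\<in>S. 0 \<le> P X Y" and X: "X \<in> S"
    and fin: "hit_time S Sopt P X < \<infinity>"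
  shows "summable (\<lambda>t. not_hit S Sopt P t X)"
    "enn2real (hit_time S Sopt P X) = (\<Sum>t. not_hit S Sopt P t X)"
    "hit_time S Sopt P X = ennreal (enn2real (hit_time S Sopt P X))"
proof -
  have nhn: "\<And>t. 0 \<le> not_hit S Sopt P t X" using nh_nonneg[OF nn X] .
  show sm: "summable (\<lambda>t. not_hit S Sopt P t X)"
    using fin unfolding hit_time_def by (intro summable_suminf_not_top[OF nhn]) auto
  have ht: "hit_time S Sopt P X = ennreal (\<Sum>t. not_hit S Sopt P t X)"
    unfolding hit_time_def using suminf_ennreal2[OF nhn sm] .
  show "enn2real (hit_time S Sopt P X) = (\<Sum>t. not_hit S Sopt P t X)"
    using ht nhn by (simp add: suminf_nonneg[OF sm])
  then show "hit_time S Sopt P X = ennreal (enn2real (hit_time S Sopt P X))"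
    using ht by simp
qed

lemma d_eq:
  assumes fin: "finite S" and nn: "\<forall>X\<in>S. \<forall>Y\<in>S. 0 \<le> P X Y"
    and ft: "\<forall>X\<in>S. hit_time S Sopt P X < \<infinity>" and X: "X \<in> S" "X \<notin> Sopt"
  shows "enn2real (hit_time S Sopt P X) = 1 + (\<Sum>Y\<in>S. P X Y * enn2real (hit_time S Sopt P Y))"
proof -
  let ?f = "\<lambda>Y t. not_hit S Sopt P t Y"
  have sm: "\<And>Y. Y \<in> S \<Longrightarrow> summable (?f Y)" using ht_real(1)[OF nn _] ft by blast
  have dd: "\<And>Y. Y \<in> S \<Longrightarrow> enn2real (hit_time S Sopt P Y) = suminf (?f Y)"
    using ht_real(2)[OF nn _] ft by blast
  have "suminf (?f X) = ?f X 0 + (\<Sum>t. ?f X (Suc t))"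
    using suminf_split_head[OF sm[OF X(1)]] by simp
  also have "(\<Sum>t. ?f X (Suc t)) = (\<Sum>t. \<Sum>Y\<in>S. P X Y * ?f Y t)"
    using X by simp
  also have "\<dots> = (\<Sum>Y\<in>S. \<Sum>t. P X Y * ?f Y t)"
    by (rule suminf_sum) (auto intro!: summable_mult sm)
  also have "\<dots> = (\<Sum>Y\<in>S. P X Y * suminf (?f Y))"
    by (rule sum.cong) (auto intro!: suminf_mult sm)
  finally show ?thesis using X dd by simp
qed

theorem corollary6:
  fixes S Sopt :: "'a set" and P1 P2 :: "'a \<Rightarrow> 'a \<Rightarrow> real"
  assumes "finite S" and "Sopt \<subseteq> S"
    and "pure_strategy S Sopt P1" and "pure_strategy S Sopt P2"
    and "\<forall>X\<in>S. hit_time S Sopt P1 X < \<infinity>"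
  shows "complementary S Sopt P1 P2 \<longleftrightarrow>
    (\<exists>q :: 'a \<Rightarrow> real. (\<forall>X\<in>S. 0 \<le> q X \<and> q X \<le> 1) \<and>
       avg_hit_time S Sopt (mixed q P1 P2) < avg_hit_time S Sopt P1)"
proof -
  note fin = assms(1)
  have nn1: "\<forall>X\<in>S. \<forall>Y\<in>S. 0 \<le> P1 X Y" and nn2: "\<forall>X\<in>S. \<forall>Y\<in>S. 0 \<le> P2 X Y"
    using assms(3,4) unfolding pure_strategy_def by auto
  define d where "d = (\<lambda>X. enn2real (hit_time S Sopt P1 X))"
  have d0: "0 \<le> d X" for X unfolding d_def by simp
  have dopt: "d X = 0" if "X \<in> Sopt" for X
    unfolding d_def hit_time_def using that by (simp add: nh_opt)
  have deq: "d X = 1 + (\<Sum>Y\<in>S. P1 X Y * d Y)" if "X \<in> S - Sopt" for X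
    unfolding d_def using d_eq[OF fin nn1 assms(5)] that by blast
  have ht1: "hit_time S Sopt P1 X = ennreal (d X)" if "X \<in> S" for X
    unfolding d_def by (rule ht_real(3)[OF nn1 that assms(5)[rule_format, OF that]])
  have sumopt: "(\<Sum>Y\<in>S - Sopt. P X Y * d Y) = (\<Sum>Y\<in>S. P X Y * d Y)" for P X
    using fin dopt by (intro sum.mono_neutral_left) auto
  have D1: "Delta S Sopt d P1 X = 1" if "X \<in> S - Sopt" for X
    unfolding Delta_def sumopt using deq[OF that] by linarith
  have "(\<Sum>X\<in>S. hit_time S Sopt P1 X) = (\<Sum>X\<in>S. ennreal (d X))"
    by (rule sum.cong) (simp_all add: ht1)
  also have "\<dots> = ennreal (sum d S)" using d0 by simp
  finally have avg1: "avg_hit_time S Sopt P1 = ennreal (sum d S) / of_nat (card S)"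
    unfolding avg_hit_time_def by simp
  have mixnn: "\<forall>X\<in>S. \<forall>Y\<in>S. 0 \<le> mixed q P1 P2 X Y" if "\<forall>X\<in>S. 0 \<le> q X \<and> q X \<le> 1" for q
    using that nn1 nn2 unfolding mixed_def by (auto intro!: add_nonneg_nonneg mult_nonneg_nonneg)
  show ?thesis
  proof
    assume "complementary S Sopt P1 P2"
    then obtain X0 where X0: "X0 \<in> S - Sopt" "Delta S Sopt d P1 X0 < Delta S Sopt d P2 X0"
      unfolding complementary_def d_def[symmetric] Let_def by blast
    define c where "c = 1 + (\<Sum>Y\<in>S. P2 X0 Y * d Y)"
    have cd: "c < d X0" using X0 D1[OF X0(1)] unfolding Delta_def sumopt c_def by simp
    have c1: "1 \<le> c" unfolding c_def using nn2 X0 d0 by (auto intro!: sum_nonneg)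
    define q where "q = (\<lambda>X. if X = X0 then 0 else 1::real)"
    define e where "e = d(X0 := c)"
    have q01: "\<forall>X\<in>S. 0 \<le> q X \<and> q X \<le> 1" unfolding q_def by auto
    have mq: "mixed q P1 P2 X Y = (if X = X0 then P2 X Y else P1 X Y)" for X Y
      unfolding mixed_def q_def by simp
    have e0: "\<forall>X\<in>S. 0 \<le> e X" unfolding e_def using d0 c1 by auto
    have ed: "e X \<le> d X" for X unfolding e_def using cd by auto
    have ee: "\<forall>X\<in>S - Sopt. 1 + (\<Sum>Y\<in>S. mixed q P1 P2 X Y * e Y) \<le> e X"
    proof
      fix X assume XS: "X \<in> S - Sopt"
      show "1 + (\<Sum>Y\<in>S. mixed q P1 P2 X Y * e Y) \<le> e X"
      proof (cases "X = X0")
        case True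
        have "(\<Sum>Y\<in>S. mixed q P1 P2 X Y * e Y) \<le> (\<Sum>Y\<in>S. P2 X0 Y * d Y)"
          using True XS nn2 ed by (auto simp: mq intro!: sum_mono mult_left_mono)
        then show ?thesis using True unfolding e_def c_def by simp
      next
        case False
        have "(\<Sum>Y\<in>S. mixed q P1 P2 X Y * e Y) \<le> (\<Sum>Y\<in>S. P1 X Y * d Y)"
          using False XS nn1 ed by (auto simp: mq intro!: sum_mono mult_left_mono)
        then show ?thesis using False deq[OF XS, symmetric] unfolding e_def by simp
      qed
    qed
    have up: "hit_time S Sopt (mixed q P1 P2) X \<le> ennreal (e X)" if "X \<in> S" for X
      using upper[OF fin mixnn[OF q01] e0 ee that] .
    have "(\<Sum>X\<in>S. hit_time S Sopt (mixed q P1 P2) X) \<le> (\<Sum>X\<in>S. ennreal (e X))"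
      using up by (rule sum_mono)
    also have "\<dots> = ennreal (sum e S)" using e0 by simp
    finally have le: "avg_hit_time S Sopt (mixed q P1 P2) \<le> ennreal (sum e S) / of_nat (card S)"
      unfolding avg_hit_time_def by (rule divide_right_mono_ennreal)
    have lt: "sum e S < sum d S"
      using X0 cd by (intro sum_strict_mono_ex1[OF fin]) (auto simp: ed e_def)
    have cS: "0 < card S" using X0 fin by (auto simp: card_gt_0_iff)
    have "ennreal (sum e S) / of_nat (card S) = ennreal (sum e S / card S)"
      using cS e0 by (simp add: ennreal_of_nat_eq_real_of_nat divide_ennreal sum_nonneg)
    also have "\<dots> < ennreal (sum d S / card S)"
    proof (rule ennreal_lessI)
      have "0 \<le> sum e S" using e0 by (simp add: sum_nonneg)
      then have "0 < sum d S" using lt by linarith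
      then show "0 < sum d S / real (card S)" using cS by simp
      show "sum e S / real (card S) < sum d S / real (card S)"
        using lt cS by (simp add: divide_strict_right_mono)
    qed
    also have "\<dots> = ennreal (sum d S) / of_nat (card S)"
      using cS d0 by (simp add: ennreal_of_nat_eq_real_of_nat divide_ennreal sum_nonneg)
    finally show "\<exists>q. (\<forall>X\<in>S. 0 \<le> q X \<and> q X \<le> 1) \<and>
       avg_hit_time S Sopt (mixed q P1 P2) < avg_hit_time S Sopt P1"
      using le q01 avg1 by (intro exI[of _ q]) auto
  next
    assume "\<exists>q. (\<forall>X\<in>S. 0 \<le> q X \<and> q X \<le> 1) \<and>
       avg_hit_time S Sopt (mixed q P1 P2) < avg_hit_time S Sopt P1"
    then obtain q where q01: "\<forall>X\<in>S. 0 \<le> q X \<and> q X \<le> 1"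
      and lt: "avg_hit_time S Sopt (mixed q P1 P2) < avg_hit_time S Sopt P1" by blast
    show "complementary S Sopt P1 P2"
    proof (rule ccontr)
      assume nc: "\<not> complementary S Sopt P1 P2"
      have D2: "d X \<le> 1 + (\<Sum>Y\<in>S. P2 X Y * d Y)" if "X \<in> S - Sopt" for X
        using nc that D1[OF that] unfolding complementary_def d_def[symmetric] Let_def Delta_def sumopt
        by force
      have ee: "\<forall>X\<in>S - Sopt. d X \<le> 1 + (\<Sum>Y\<in>S. mixed q P1 P2 X Y * d Y)"
      proof
        fix X assume XS: "X \<in> S - Sopt"
        have "d X = q X * d X + (1 - q X) * d X" by algebra
        also have "\<dots> \<le> q X * (1 + (\<Sum>Y\<in>S. P1 X Y * d Y)) + (1 - q X) * (1 + (\<Sum>Y\<in>S. P2 X Y * d Y))"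
          using q01 XS deq[OF XS, symmetric] D2[OF XS] by (intro add_mono mult_left_mono) auto
        also have "\<dots> = 1 + (\<Sum>Y\<in>S. mixed q P1 P2 X Y * d Y)"
          unfolding mixed_def by (simp add: sum.distrib sum_distrib_left sum_subtractf algebra_simps)
        finally show "d X \<le> 1 + (\<Sum>Y\<in>S. mixed q P1 P2 X Y * d Y)" .
      qed
      have e0: "\<forall>X\<in>S. 0 \<le> d X \<and> d X \<le> sum d S"
        using d0 fin by (auto intro: member_le_sum)
      have lo: "ennreal (d X) \<le> hit_time S Sopt (mixed q P1 P2) X" if "X \<in> S" for X
        using lower[OF fin mixnn[OF q01] e0 _ ee that] dopt by blast
      have "(\<Sum>X\<in>S. hit_time S Sopt P1 X) \<le> (\<Sum>X\<in>S. hit_time S Sopt (mixed q P1 P2) X)"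
        using lo ht1 by (intro sum_mono) auto
      then have "avg_hit_time S Sopt P1 \<le> avg_hit_time S Sopt (mixed q P1 P2)"
        unfolding avg_hit_time_def by (rule divide_right_mono_ennreal)
      then show False using lt by simp
    qed
  qed
qed

end
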